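(* $$\liminf_{a,b\to\infty} r(a,b)=1,$$ where the limit inferior is taken as $\min(a,b)\to\infty$ over pairs of positive integers $(a,b)$.
   Context: $\phi$ denotes Euler's totient function. For positive integers $a,b$, $c(a,b)$ is the least positive integer $c$ such that $\phi(a!)\,\phi(b!)$ divides $\phi(c!)$, and $r(a,b)=c(a,b)/(a+b)$. *)

theory Defs
  imports "HOL-Analysis.Analysis" "HOL-Number_Theory.Number_Theory"
begin

definition cfun :: "nat \<Rightarrow> nat \<Rightarrow> nat" where
  "cfun a b = (LEAST c. c > 0 \<and> totient (fact a) * totient (fact b) dvd totient (fact c))"

definition rfun :: "nat \<Rightarrow> nat \<Rightarrow> real" where
  "rfun a b = real (cfun a b) / real (a + b)"

end

theory Submission imports Defs begin

lemma tot_smooth: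
  fixes m d :: nat
  assumes "m > 0" "d > 0" "\<And>p. prime p \<Longrightarrow> p dvd d \<Longrightarrow> p dvd m"
  shows "totient (m * d) = totient m * d"
proof -
  have "prime_factors (m * d) = prime_factors m"
    using assms by (auto simp: prime_factors_product in_prime_factors_iff)
  hence "real (totient (m*d)) = real (totient m * d)"
    by (simp add: totient_formula2)
  thus ?thesis by (simp only: of_nat_eq_iff)
qed

lemma tot_fact_Suc:
  "totient (fact (Suc n)) = (if prime (Suc n) then n * totient (fact n) else Suc n * totient (fact n))"
proof (cases "prime (Suc n)")
  case True
  have "coprime (Suc n) (fact n :: nat)"
    using True by (simp add: prime_imp_coprime prime_dvd_fact_iff)
  hence "totient (Suc n * fact n) = totient (Suc n) * totient (fact n)"
    by (rule totient_mult_coprime)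
  with True show ?thesis by (simp add: totient_prime fact_Suc)
next
  case False
  have "totient (fact n * Suc n) = totient (fact n) * Suc n"
  proof (rule tot_smooth)
    fix p assume p: "prime p" "p dvd Suc n"
    hence "p \<le> Suc n" by (simp add: dvd_imp_le)
    moreover have "p \<noteq> Suc n" using p False by auto
    ultimately show "p dvd fact n" using p by (simp add: prime_dvd_fact_iff)
  qed auto
  with False show ?thesis by (simp add: fact_Suc mult.commute)
qed

lemma tot_fact_bounds:
  "fact (n - 1) \<le> totient (fact n :: nat) \<and> totient (fact n :: nat) dvd fact n * fact (n - 1)"
proof (induction n)
  case 0 then show ?case by simp
next
  case (Suc n)
  have fs: "(fact (Suc n) :: nat) = Suc n * fact n" by (simp add: fact_Suc)
  show ?case
  proof (cases "prime (Suc n)")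
    case True
    have n1: "n \<ge> 1" using True prime_ge_2_nat[OF True] by simp
    have "fact n = n * fact (n-1)" using n1
      by (metis Suc_diff_1 fact_Suc less_le_trans nat_less_le of_nat_id zero_less_one)
    hence le: "(fact n::nat) \<le> n * totient (fact n)" using Suc.IH by simp
    have "n * totient (fact n) dvd n * (fact n * fact (n - 1))" using Suc.IH by (intro mult_dvd_mono dvd_refl) (simp only:)
    moreover have "n * (fact n * fact (n - 1)) = (fact n * fact n :: nat)"
      using \<open>fact n = n * fact (n-1)\<close> by simp
    moreover have "(fact n * fact n :: nat) dvd fact (Suc n) * fact n"
      unfolding fs by simp
    ultimately have "n * totient (fact n) dvd fact (Suc n) * fact (Suc n - 1)"
      by (metis diff_Suc_1 dvd_trans)
    moreover have "totient (fact (Suc n)) = n * totient (fact n)"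
      using True tot_fact_Suc[of n] by presburger
    ultimately show ?thesis using le by (simp only: diff_Suc_1)
  next
    case False
    have "(fact n :: nat) \<le> Suc n * fact (n - 1)"
      by (cases n) (auto simp: fact_Suc)
    also have "\<dots> \<le> Suc n * totient (fact n)" using Suc.IH mult_le_mono2 by blast
    finally have le: "(fact n::nat) \<le> Suc n * totient (fact n)" .
    have "Suc n * totient (fact n) dvd Suc n * (fact n * fact (n - 1))" using Suc.IH by (intro mult_dvd_mono dvd_refl) (simp only:)
    moreover have "Suc n * (fact n * fact (n - 1)) dvd (fact (Suc n) * fact (Suc n - 1) :: nat)"
    proof -
      have "fact (n-1) dvd (fact n::nat)" by (simp add: fact_dvd)
      then have "Suc n * (fact n * fact (n-1)) dvd Suc n * (fact n * (fact n::nat))"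
        by (intro mult_dvd_mono dvd_refl)
      then show ?thesis by (simp only: fs diff_Suc_1 mult.assoc)
    qed
    ultimately have "Suc n * totient (fact n) dvd fact (Suc n) * fact (Suc n - 1)"
      by (rule dvd_trans)
    moreover have "totient (fact (Suc n)) = Suc n * totient (fact n)"
      using False tot_fact_Suc[of n] by presburger
    ultimately show ?thesis using le by (simp only: diff_Suc_1)
  qed
qed

lemma construct:
  assumes "b \<le> a" "a \<ge> 1"
  shows "totient (fact a) * totient (fact b) dvd totient (fact (a + 2*b) :: nat)"
proof -
  define d :: nat where "d = fact b * fact b"
  have f1: "fact (a + 2*b) = (fact a :: nat) * (fact (2*b) * ((a+2*b) choose a))"
    using binomial_fact_lemma[of a "a+2*b"] by (simp add: mult_ac)
  have f2: "(fact (2*b) :: nat) = d * ((2*b) choose b)"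
    using binomial_fact_lemma[of b "2*b"] by (simp add: d_def mult_ac mult_2)
  have dpos: "d > 0" by (simp add: d_def)
  have "totient (fact a * d) = totient (fact a) * d"
  proof (rule tot_smooth)
    fix p :: nat assume p: "prime p" "p dvd d"
    hence "p dvd fact b" by (simp add: d_def prime_dvd_mult_iff)
    hence "p \<le> b" using p by (simp add: prime_dvd_fact_iff)
    thus "p dvd fact a" using p assms by (simp add: prime_dvd_fact_iff)
  qed (use dpos in auto)
  moreover have "fact a * d dvd (fact (a + 2*b) :: nat)"
    unfolding f1 f2 by simp
  ultimately have "totient (fact a) * d dvd totient (fact (a + 2*b))"
    by (metis totient_dvd)
  moreover have "totient (fact a) * totient (fact b) dvd totient (fact a) * d"
  proof -
    have "totient (fact b) dvd (fact b * fact (b - 1) :: nat)" using tot_fact_bounds[of b] by simp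
    also have "\<dots> dvd d" unfolding d_def by (simp add: mult_dvd_mono fact_dvd)
    finally show ?thesis by simp
  qed
  ultimately show ?thesis by (rule dvd_trans[rotated])
qed


lemma cfun_props:
  assumes "a \<ge> 1" "b \<ge> 1"
  shows "cfun a b > 0 \<and> totient (fact a) * totient (fact b) dvd totient (fact (cfun a b))"
proof -
  have "\<exists>c. c > 0 \<and> totient (fact a) * totient (fact b) dvd totient (fact c)"
  proof (cases "b \<le> a")
    case True
    then show ?thesis using construct[of b a] assms by (intro exI[of _ "a + 2*b"]) auto
  next
    case False
    then show ?thesis using construct[of a b] assms
      by (intro exI[of _ "b + 2*a"]) (auto simp: mult.commute)
  qed
  then show ?thesis unfolding cfun_def by (rule LeastI_ex)
qed

lemma cfun_le:
  assumes "b \<le> a" "b \<ge> 1"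
  shows "cfun a b \<le> a + 2*b"
  unfolding cfun_def using construct[of b a] assms by (intro Least_le) auto

lemma fact_pow_le: "fact c * (c+1)^k \<le> (fact (c+k) :: nat)"
proof (induction k)
  case 0 then show ?case by simp
next
  case (Suc k)
  have "fact c * (c+1)^Suc k = (c+1) * (fact c * (c+1)^k)" by (simp add: algebra_simps)
  also have "\<dots> \<le> (c + Suc k) * fact (c+k)" using Suc.IH by (intro mult_le_mono) auto
  also have "\<dots> = fact (c + Suc k)" by (simp add: fact_Suc)
  finally show ?case .
qed

lemma sq_le_pow2: "n \<ge> 4 \<Longrightarrow> n^2 \<le> (2::nat)^n"
proof (induction n rule: dec_induct)
  case base then show ?case by simp
next
  case (step n)
  have "(Suc n)^2 = n^2 + 2*n + 1" by (simp add: power2_eq_square)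
  also have "\<dots> \<le> n^2 + n^2" proof -
    have "4*n \<le> n*n" using step.hyps by (intro mult_le_mono1) simp
    thus ?thesis using step.hyps unfolding power2_eq_square by linarith
  qed
  also have "\<dots> \<le> 2^Suc n" using step.IH by simp
  finally show ?case .
qed

lemma lower:
  assumes "a \<ge> 3" "b \<ge> 3" "(a+b) div 2 > 4^m" "m \<ge> 1"
  shows "real (cfun a b) / real (a+b) \<ge> 1 - 1 / real m"
proof -
  define c where "c = cfun a b"
  define n where "n = a + b"
  have cp: "c > 0" and dv: "totient (fact a) * totient (fact b) dvd totient (fact c)"
    using cfun_props[of a b] assms by (auto simp: c_def)
  have h1: "fact (a-1) * fact (b-1) \<le> (fact c :: nat)"
  proof -
    have "fact (a-1) * fact (b-1) \<le> totient (fact a) * totient (fact b)"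
      using tot_fact_bounds[of a] tot_fact_bounds[of b] by (intro mult_le_mono) auto
    also have "\<dots> \<le> totient (fact c)" using dv by (intro dvd_imp_le) auto
    also have "\<dots> \<le> fact c" by (rule totient_le)
    finally show ?thesis .
  qed
  have ca: "c \<ge> a"
  proof (rule ccontr)
    assume "\<not> c \<ge> a"
    hence "(fact c :: nat) \<le> fact (a-1)" by (intro fact_mono) auto
    moreover have "(2::nat) \<le> fact (b-1)"
    proof -
      have "b-1 \<le> (fact (b-1) :: nat)" by (rule fact_ge_self)
      thus ?thesis using assms by linarith
    qed
    moreover have "(0::nat) < fact (a-1)" by simp
    ultimately have "fact (a-1) * 2 \<le> (fact (a-1) * fact (b-1) :: nat)" using mult_le_mono2 by blast
    hence "fact (a-1) * 2 \<le> (fact (a-1) :: nat)" using h1 \<open>fact c \<le> fact (a-1)\<close> by linarith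
    thus False using \<open>(0::nat) < fact (a-1)\<close> by simp
  qed
  have cb: "c \<ge> b"
  proof (rule ccontr)
    assume "\<not> c \<ge> b"
    hence "(fact c :: nat) \<le> fact (b-1)" by (intro fact_mono) auto
    moreover have "(2::nat) \<le> fact (a-1)"
    proof -
      have "a-1 \<le> (fact (a-1) :: nat)" by (rule fact_ge_self)
      thus ?thesis using assms by linarith
    qed
    moreover have "(0::nat) < fact (b-1)" by simp
    ultimately have "fact (b-1) * 2 \<le> (fact (b-1) * fact (a-1) :: nat)" using mult_le_mono2 by blast
    hence "fact (b-1) * 2 \<le> (fact (b-1) :: nat)" using h1 \<open>fact c \<le> fact (b-1)\<close> by (metis order.trans mult.commute)
    thus False using \<open>(0::nat) < fact (b-1)\<close> by simp
  qed
  show ?thesis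
  proof (cases "c \<ge> n")
    case True
    hence "real c / real n \<ge> 1" using assms by (simp add: n_def)
    moreover have "1 - 1 / real m \<le> 1" by simp
    ultimately have "1 - 1 / real m \<le> real c / real n" by linarith
    thus ?thesis by (simp add: c_def n_def)
  next
    case False
    define D where "D = n - c"
    have h2: "fact n \<le> (fact c :: nat) * 2^n * n^2"
    proof -
      have "fact n = (fact a * fact b * (n choose a) :: nat)"
        using binomial_fact_lemma[of a n] by (simp add: n_def)
      also have "(fact a :: nat) = a * fact (a-1)" using assms by (simp add: fact_reduce)
      also have "(fact b :: nat) = b * fact (b-1)" using assms by (simp add: fact_reduce)
      also have "a * fact (a-1) * (b * fact (b-1)) * (n choose a)
                 = (a*b) * (fact (a-1) * fact (b-1)) * (n choose a)" by (simp add: mult_ac)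
      also have "\<dots> \<le> (n*n) * fact c * 2^n"
        using h1 binomial_le_pow2[of n a] by (intro mult_le_mono) (auto simp: n_def)
      finally show ?thesis by (simp add: power2_eq_square mult_ac)
    qed
    have h3: "fact c * (c+1)^D \<le> (fact n :: nat)"
      using fact_pow_le[of c D] False by (simp add: D_def)
    have h4: "(n div 2)^D \<le> (4::nat)^n"
    proof -
      have "(n div 2)^D \<le> (c+1)^D" using ca cb by (intro power_mono) (simp_all add: n_def)
      moreover have "fact c * (c+1)^D \<le> fact c * (2^n * n^2 :: nat)"
      proof -
        have "fact c * (c+1)^D \<le> (fact n :: nat)" by (rule h3)
        also have "\<dots> \<le> fact c * 2^n * n^2" by (rule h2)
        also have "\<dots> = fact c * (2^n * n^2)" by (simp only: mult.assoc)
        finally show ?thesis .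
      qed
      hence "(c+1)^D \<le> 2^n * n^2" by simp
      moreover have "n^2 \<le> (2::nat)^n" using assms by (intro sq_le_pow2) (simp add: n_def)
      ultimately have "(n div 2)^D \<le> (2::nat)^n * 2^n" by (meson le_trans mult_le_mono2)
      also have "\<dots> = (2*2)^n" by (rule power_mult_distrib[symmetric])
      also have "(2*2::nat) = 4" by simp
      finally show ?thesis .
    qed
    have mD: "m * D < n"
    proof (rule ccontr)
      assume "\<not> m * D < n"
      hence le: "n \<le> m * D" by simp
      have hp: "n div 2 \<ge> 1" using assms by (simp add: n_def)
      have "(n div 2)^n \<le> (n div 2)^(m*D)" using hp le by (intro power_increasing) auto
      also have "\<dots> = ((n div 2)^D)^m" by (simp add: power_mult mult.commute)
      also have "\<dots> \<le> ((4::nat)^n)^m" using h4 by (intro power_mono) auto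
      also have "\<dots> = (4^m)^n" by (metis power_mult mult.commute)
      finally have "(n div 2)^n \<le> (4^m)^n" .
      moreover have "Suc (n-1) = n" using assms by (simp add: n_def)
      ultimately have "(n div 2)^Suc (n-1) \<le> (4^m)^Suc(n-1)" by simp
      hence "n div 2 \<le> 4^m" by (rule power_le_imp_le_base) simp
      thus False using assms(3) unfolding n_def by linarith
    qed
    have npos: "real n > 0" using assms by (simp add: n_def)
    have "real m * (real n - real c) < real n" using mD False
    proof -
      have "real (m * D) < real n" using mD by (simp only: of_nat_less_iff)
      moreover have "real D = real n - real c" using False by (simp add: D_def of_nat_diff)
      ultimately show ?thesis by simp
    qed
    hence "1 - 1 / real m \<le> real c / real n" using npos assms
      by (simp add: field_simps)
    thus ?thesis by (simp add: c_def n_def)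
  qed
qed


lemma upper_real:
  assumes "b \<ge> (1::nat)"
  shows "rfun (b*b) b \<le> 1 + 1 / real b"
proof -
  have "cfun (b*b) b \<le> b*b + 2*b" using assms by (intro cfun_le) (auto simp: le_square)
  hence "real (cfun (b*b) b) \<le> real b * real b + 2 * real b" by (metis of_nat_le_iff of_nat_add of_nat_mult of_nat_numeral)
  moreover have pos: "real b * real b + real b > 0" using assms by (simp add: add_pos_pos)
  ultimately have "rfun (b*b) b \<le> (real b * real b + 2 * real b) / (real b * real b + real b)"
    unfolding rfun_def by (simp add: divide_right_mono)
  also have "\<dots> \<le> 1 + 1 / real b"
  proof -
    have bp: "real b > 0" using assms by simp
    have "(real b * real b + 2 * real b) * real b \<le> (real b + 1) * (real b * real b + real b)"
      using bp by (simp add: algebra_simps)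
    thus ?thesis using bp pos by (simp add: field_simps)
  qed
  finally show ?thesis .
qed

theorem theorem1p2:
  shows "Liminf (sequentially \<times>\<^sub>F sequentially) (\<lambda>(a, b). ereal (rfun a b)) = 1"
proof (rule antisym)
  show "Liminf (sequentially \<times>\<^sub>F sequentially) (\<lambda>(a, b). ereal (rfun a b)) \<le> 1"
  proof (rule Liminf_least)
    fix P assume "eventually P (sequentially \<times>\<^sub>F sequentially)"
    then obtain N where N: "\<forall>m\<ge>N. \<forall>n\<ge>N. P (n, m)" by (auto simp: eventually_prod_sequentially)
    show "(INF x\<in>Collect P. (\<lambda>(a, b). ereal (rfun a b)) x) \<le> 1"
    proof (rule ereal_le_epsilon2)
      fix e :: real assume e: "0 < e"
      obtain k :: nat where k: "1 / e < real k" using reals_Archimedean2 by blast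
      define b where "b = max (max N 1) k"
      have b1: "b \<ge> 1" and bN: "b \<ge> N" and bk: "real k \<le> real b" by (auto simp: b_def)
      have kpos: "real k > 0" using k e by (smt (verit) divide_pos_pos)
      have "1 / real b \<le> 1 / real k" using kpos bk by (simp add: frac_le)
      also have "1 / real k < e" using k kpos e by (simp add: field_simps)
      finally have be: "1 / real b < e" .
      have "b*b \<ge> N" using bN b1 by (metis le_trans le_square)
      hence "P (b*b, b)" using N bN by blast
      hence "(INF x\<in>Collect P. (\<lambda>(a, b). ereal (rfun a b)) x) \<le> ereal (rfun (b*b) b)"
        by (intro INF_lower2[of "(b*b, b)"]) auto
      also have "\<dots> \<le> ereal (1 + e)" using upper_real[OF b1] be by simp
      finally show "(INF x\<in>Collect P. (\<lambda>(a, b). ereal (rfun a b)) x) \<le> 1 + ereal e" by (simp add: add.commute)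
    qed
  qed
next
  show "1 \<le> Liminf (sequentially \<times>\<^sub>F sequentially) (\<lambda>(a, b). ereal (rfun a b))"
    unfolding le_Liminf_iff
  proof (intro allI impI)
    fix y :: ereal assume "y < 1"
    then obtain z :: real where yz: "y < ereal z" and z1: "ereal z < 1" using ereal_dense2 by blast
    have z1': "z < 1" using z1 by simp
    obtain m :: nat where m: "1 / (1 - z) < real m" using reals_Archimedean2 by blast
    have mpos: "real m > 0" using m z1' by (smt (verit) divide_pos_pos)
    have "1 / real m < 1 - z" using m mpos z1' by (simp add: field_simps)
    hence zm: "z < 1 - 1 / real m" by simp
    have m1: "m \<ge> 1" using mpos by simp
    show "\<forall>\<^sub>F x in sequentially \<times>\<^sub>F sequentially. y < (\<lambda>(a, b). ereal (rfun a b)) x"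
      unfolding eventually_prod_sequentially
    proof (intro exI allI impI)
      fix a b :: nat assume a: "a \<ge> 2 * 4^m + 3" and b: "b \<ge> 2 * 4^m + 3"
      have "(a+b) div 2 > 4^m" using a b by linarith
      hence "rfun b a \<ge> 1 - 1 / real m"
        using lower[of b a m] a b m1 by (simp add: rfun_def add.commute)
      hence "z < rfun b a" using zm by linarith
      thus "y < (\<lambda>(a, b). ereal (rfun a b)) (b, a)" using yz by (simp add: order.strict_trans)
    qed
  qed
qed

end
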